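(* Let $\mathbb{R}^n$ and $\mathbb{R}^m$ be equipped with arbitrary norms $\|\cdot\|$, with dual norms $\|\cdot\|_*$, and let $g:\mathbb{R}^n\to\mathbb{R}^m$, $y\in\mathbb{R}^m$, $\rho>0$, $L>0$, $\mu_0>0$. Let $B=\{x\in\mathbb{R}^n:\|x\|\le\rho\}$. Assume: (A) $g(0)=0$, $g$ is differentiable in $B$, and $\|g'(x^a)-g'(x^b)\|\le L\|x^a-x^b\|$ for all $x^a,x^b\in B$; (B') $\|g'(0)^T h\|_*\ge\mu_0\|h\|_*$ for all $h\in\mathbb{R}^m$; (C') $\|y\|<\frac{\mu_0^2}{4L}$ and $\frac{\mu_0}{2L}\le\rho$. Then there exists a solution $x^*$ of $g(x)=y$ with $\|x^*\|\le\frac{2\|y\|}{\mu_0}$.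
   Context: For a vector $c$, the dual norm is $\|c\|_*=\sup_{\|x\|=1}(c,x)$. The norm of $g'(x)$ is the operator norm subordinate to the chosen vector norms. *)

theory Defs
  imports "HOL-Analysis.Analysis"
begin

definition is_norm :: "('a::real_vector \<Rightarrow> real) \<Rightarrow> bool" where
  "is_norm N \<longleftrightarrow> (\<forall>x. 0 \<le> N x) \<and> (\<forall>x. N x = 0 \<longleftrightarrow> x = 0)
     \<and> (\<forall>c x. N (c *\<^sub>R x) = \<bar>c\<bar> * N x) \<and> (\<forall>x y. N (x + y) \<le> N x + N y)"

definition dual_norm :: "(real^'n \<Rightarrow> real) \<Rightarrow> real^'n \<Rightarrow> real" where
  "dual_norm N c = Sup {c \<bullet> x | x. N x = 1}"

definition op_norm :: "(real^'n \<Rightarrow> real) \<Rightarrow> (real^'m \<Rightarrow> real) \<Rightarrow> real^'n^'m \<Rightarrow> real" where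
  "op_norm Nn Nm A = Sup {Nm (A *v x) | x. Nn x = 1}"

end

theory Submission
  imports Defs
begin

lemma isn_basic:
  assumes "is_norm N"
  shows "N 0 = 0" "N (-x) = N x" "N (x - y) = N (y - x)" "N x \<ge> 0"
    "N (x + y) \<le> N x + N y" "N (c *\<^sub>R x) = \<bar>c\<bar> * N x" "N x = 0 \<longleftrightarrow> x = 0"
proof -
  have h: "\<And>c x. N (c *\<^sub>R x) = \<bar>c\<bar> * N x" using assms unfolding is_norm_def by blast
  show "N 0 = 0" using assms unfolding is_norm_def by blast
  show "N (-x) = N x" using h[of "-1" x] by simp
  show "N (x - y) = N (y - x)" using h[of "-1" "x - y"] by simp
  show "N x \<ge> 0" "N (x + y) \<le> N x + N y" "N (c *\<^sub>R x) = \<bar>c\<bar> * N x" "N x = 0 \<longleftrightarrow> x = 0"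
    using assms unfolding is_norm_def by blast+
qed

lemma isn_sum:
  assumes "is_norm N" "finite S"
  shows "N (sum f S) \<le> (\<Sum>i\<in>S. N (f i))"
  using assms(2)
proof (induction S rule: finite_induct)
  case empty then show ?case by (simp add: isn_basic(1)[OF assms(1)])
next
  case (insert a F)
  then show ?case using isn_basic(5)[OF assms(1), of "f a" "sum f F"] by simp
qed

lemma isn_upper:
  fixes N :: "'a::euclidean_space \<Rightarrow> real"
  assumes "is_norm N"
  shows "\<exists>C>0. \<forall>x. N x \<le> C * norm x"
proof -
  define C where "C = (\<Sum>b\<in>Basis. N b) + 1"
  have C0: "C > 0" unfolding C_def using isn_basic(4)[OF assms] by (simp add: sum_nonneg add_nonneg_pos)
  have "N x \<le> C * norm x" for x
  proof -
    have "N x = N (\<Sum>b\<in>Basis. (x \<bullet> b) *\<^sub>R b)" by (simp add: euclidean_representation)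
    also have "\<dots> \<le> (\<Sum>b\<in>Basis. N ((x \<bullet> b) *\<^sub>R b))" by (rule isn_sum[OF assms]) simp
    also have "\<dots> = (\<Sum>b\<in>Basis. \<bar>x \<bullet> b\<bar> * N b)" using isn_basic(6)[OF assms] by simp
    also have "\<dots> \<le> (\<Sum>b\<in>Basis. norm x * N b)"
      by (intro sum_mono mult_right_mono) (auto simp: Basis_le_norm isn_basic(4)[OF assms])
    also have "\<dots> = norm x * (\<Sum>b\<in>Basis. N b)" by (simp add: sum_distrib_left)
    also have "\<dots> \<le> C * norm x" unfolding C_def by (simp add: algebra_simps)
    finally show ?thesis .
  qed
  with C0 show ?thesis by blast
qed

lemma isn_cont:
  fixes N :: "'a::euclidean_space \<Rightarrow> real"
  assumes "is_norm N"
  shows "continuous_on S N"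
proof -
  obtain C where C: "C > 0" "\<And>x. N x \<le> C * norm x" using isn_upper[OF assms] by blast
  have d: "\<bar>N x - N y\<bar> \<le> C * norm (x - y)" for x y
  proof -
    have "N x \<le> N (x - y) + N y" using isn_basic(5)[OF assms, of "x - y" y] by simp
    moreover have "N y \<le> N (y - x) + N x" using isn_basic(5)[OF assms, of "y - x" x] by simp
    moreover have "N (y - x) = N (x - y)" using isn_basic(3)[OF assms] by simp
    moreover have "N (x - y) \<le> C * norm (x - y)" using C by simp
    ultimately show ?thesis by linarith
  qed
  show ?thesis unfolding continuous_on_iff
  proof (intro ballI allI impI)
    fix x e assume "x \<in> S" "(e::real) > 0"
    show "\<exists>d>0. \<forall>x'\<in>S. dist x' x < d \<longrightarrow> dist (N x') (N x) < e"
    proof (intro exI[of _ "e / C"] conjI ballI impI)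
      show "e / C > 0" using C \<open>e>0\<close> by simp
      fix x' assume "dist x' x < e / C"
      then have "C * norm (x' - x) < e" using C by (simp add: dist_norm field_simps)
      then show "dist (N x') (N x) < e" using d[of x' x] by (simp add: dist_real_def)
    qed
  qed
qed

lemma isn_lower:
  fixes N :: "'a::euclidean_space \<Rightarrow> real"
  assumes "is_norm N"
  shows "\<exists>c>0. \<forall>x. c * norm x \<le> N x"
proof -
  have "sphere (0::'a) 1 \<noteq> {}"
  proof -
    obtain b :: 'a where "b \<in> Basis" using nonempty_Basis by blast
    then show ?thesis by (metis mem_sphere_0 norm_Basis empty_iff)
  qed
  then obtain x0 where x0: "x0 \<in> sphere 0 1" "\<And>y. y \<in> sphere 0 1 \<Longrightarrow> N x0 \<le> N y"
    using continuous_attains_inf[OF compact_sphere _ isn_cont[OF assms]] by blast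
  have "x0 \<noteq> 0" using x0(1) by auto
  then have m: "N x0 > 0" using isn_basic(4,7)[OF assms, of x0] by linarith
  have "N x0 * norm x \<le> N x" for x
  proof (cases "x = 0")
    case True then show ?thesis using isn_basic(1)[OF assms] by simp
  next
    case False
    have "N x0 \<le> N ((1 / norm x) *\<^sub>R x)" using x0(2) False by (auto simp: dist_norm)
    also have "\<dots> = N x / norm x" using isn_basic(6)[OF assms] by simp
    finally show ?thesis using False by (simp add: field_simps)
  qed
  with m show ?thesis by blast
qed

lemma isn_unit:
  fixes N :: "'a::euclidean_space \<Rightarrow> real"
  assumes "is_norm N"
  shows "\<exists>x. N x = 1"
proof -
  obtain b :: 'a where b: "b \<in> Basis" using nonempty_Basis by blast
  then have "b \<noteq> 0" by auto
  then have "N b > 0" using isn_basic(4,7)[OF assms, of b] by linarith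
  then have "N ((1 / N b) *\<^sub>R b) = 1" using isn_basic(6)[OF assms] by simp
  then show ?thesis by blast
qed

lemma dual_bdd:
  fixes N :: "real^'n \<Rightarrow> real"
  assumes "is_norm N"
  shows "bdd_above {h \<bullet> x | x. N x = 1}"
proof -
  obtain c where c: "c > 0" "\<And>x. c * norm x \<le> N x" using isn_lower[OF assms] by blast
  have "h \<bullet> x \<le> norm h / c" if "N x = 1" for x
  proof -
    have "norm x \<le> 1 / c" using c(2)[of x] that c(1) by (simp add: field_simps)
    then have "norm h * norm x \<le> norm h * (1 / c)" by (intro mult_left_mono) auto
    then show ?thesis using Cauchy_Schwarz_ineq2[of h x] by simp
  qed
  then show ?thesis unfolding bdd_above_def by blast
qed

lemma dual_le:
  fixes N :: "real^'n \<Rightarrow> real"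
  assumes "is_norm N"
  shows "h \<bullet> z \<le> dual_norm N h * N z"
proof (cases "z = 0")
  case True then show ?thesis by (simp add: isn_basic(1)[OF assms])
next
  case False
  then have pos: "N z > 0" using isn_basic(4,7)[OF assms, of z] by linarith
  have "N ((1 / N z) *\<^sub>R z) = 1" using pos isn_basic(6)[OF assms] by simp
  then have "h \<bullet> ((1 / N z) *\<^sub>R z) \<le> dual_norm N h"
    unfolding dual_norm_def by (intro cSup_upper dual_bdd[OF assms]) blast
  then show ?thesis using pos by (simp add: field_simps)
qed

lemma dual_least:
  fixes N :: "real^'n \<Rightarrow> real"
  assumes "is_norm N" "\<And>x. N x = 1 \<Longrightarrow> h \<bullet> x \<le> B"
  shows "dual_norm N h \<le> B"
  unfolding dual_norm_def using isn_unit[OF assms(1)] assms(2)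
  by (intro cSup_least) auto

lemma op_le:
  fixes Nn :: "real^'n \<Rightarrow> real" and Nm :: "real^'m \<Rightarrow> real"
  assumes "is_norm Nn" "is_norm Nm"
  shows "Nm (A *v x) \<le> op_norm Nn Nm A * Nn x"
proof -
  obtain c where c: "c > 0" "\<And>x. c * norm x \<le> Nn x" using isn_lower[OF assms(1)] by blast
  obtain C where C: "C > 0" "\<And>x. Nm x \<le> C * norm x" using isn_upper[OF assms(2)] by blast
  obtain K where K: "\<And>x. norm (A *v x) \<le> norm x * K"
    using bounded_linear.bounded[OF matrix_vector_mul_bounded_linear[of A]] by blast
  have bdd: "bdd_above {Nm (A *v x) | x. Nn x = 1}"
  proof -
    have "Nm (A *v x) \<le> C * (\<bar>K\<bar> / c)" if "Nn x = 1" for x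
    proof -
      have nx: "norm x \<le> 1 / c" using c(2)[of x] that c(1) by (simp add: field_simps)
      have "norm (A *v x) \<le> norm x * \<bar>K\<bar>" using K[of x] by (meson abs_ge_self mult_left_mono norm_ge_zero order_trans)
      also have "\<dots> \<le> (1 / c) * \<bar>K\<bar>" using nx by (intro mult_right_mono) auto
      finally have "norm (A *v x) \<le> \<bar>K\<bar> / c" by simp
      then show ?thesis using C(2)[of "A *v x"] C(1) by (meson mult_left_mono less_imp_le order_trans)
    qed
    then show ?thesis unfolding bdd_above_def by blast
  qed
  show ?thesis
  proof (cases "x = 0")
    case True then show ?thesis by (simp add: isn_basic(1)[OF assms(1)] isn_basic(1)[OF assms(2)])
  next
    case False
    then have pos: "Nn x > 0" using isn_basic(4,7)[OF assms(1), of x] by linarith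
    have "Nn ((1 / Nn x) *\<^sub>R x) = 1" using pos isn_basic(6)[OF assms(1)] by simp
    then have "Nm (A *v ((1 / Nn x) *\<^sub>R x)) \<le> op_norm Nn Nm A"
      unfolding op_norm_def by (intro cSup_upper bdd) blast
    then have "Nm (A *v x) / Nn x \<le> op_norm Nn Nm A"
      using pos isn_basic(6)[OF assms(2)] by (simp add: matrix_vector_mult_scaleR)
    then show ?thesis using pos by (simp add: field_simps)
  qed
qed

lemma ball_compact:
  fixes N :: "'a::euclidean_space \<Rightarrow> real"
  assumes "is_norm N"
  shows "compact {x. N x \<le> r}"
proof -
  obtain c where c: "c > 0" "\<And>x. c * norm x \<le> N x" using isn_lower[OF assms] by blast
  have "closed {x. N x \<le> r}"
    using isn_cont[OF assms] by (intro closed_Collect_le) (auto intro: continuous_on_const)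
  moreover have "bounded {x. N x \<le> r}"
    unfolding bounded_iff
  proof (intro exI[of _ "r / c"] ballI)
    fix x assume "x \<in> {x. N x \<le> r}"
    then have "c * norm x \<le> r" using c(2)[of x] by simp
    then show "norm x \<le> r / c" using c(1) by (simp add: field_simps)
  qed
  ultimately show ?thesis by (simp add: compact_eq_bounded_closed)
qed

lemma ball_convex:
  fixes N :: "'a::euclidean_space \<Rightarrow> real"
  assumes "is_norm N"
  shows "convex {x. N x \<le> r}"
  unfolding convex_def
proof (intro ballI allI impI, clarsimp)
  fix x y and u v :: real
  assume h: "N x \<le> r" "N y \<le> r" "0 \<le> u" "0 \<le> v" "u + v = 1"
  have "N (u *\<^sub>R x + v *\<^sub>R y) \<le> N (u *\<^sub>R x) + N (v *\<^sub>R y)" by (rule isn_basic(5)[OF assms])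
  also have "\<dots> = u * N x + v * N y" using isn_basic(6)[OF assms] h by simp
  also have "\<dots> \<le> u * r + v * r" using h by (intro add_mono mult_left_mono) auto
  also have "\<dots> = (u + v) * r" by (simp add: distrib_right)
  also have "\<dots> = r" using h(5) by simp
  finally show "N (u *\<^sub>R x + v *\<^sub>R y) \<le> r" .
qed

lemma right_inverse:
  fixes Nn :: "real^'n \<Rightarrow> real" and Nm :: "real^'m \<Rightarrow> real" and A :: "real^'n^'m"
  assumes "is_norm Nn" "is_norm Nm" "\<mu> > 0"
    and "\<forall>h. dual_norm Nn (transpose A *v h) \<ge> \<mu> * dual_norm Nm h"
  shows "\<exists>d. A *v d = e \<and> Nn d \<le> Nm e / \<mu>"
proof -
  define K where "K = (\<lambda>x. A *v x) ` {x. Nn x \<le> 1}"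
  have Kc: "convex K" unfolding K_def
    by (intro convex_linear_image ball_convex[OF assms(1)] matrix_vector_mul_linear)
  have Kcl: "closed K" unfolding K_def
    by (intro compact_imp_closed compact_continuous_image ball_compact[OF assms(1)]
        linear_continuous_on matrix_vector_mul_bounded_linear)
  have mem: "z \<in> K" if z: "Nm z \<le> \<mu>" for z
  proof (rule ccontr)
    assume "z \<notin> K"
    then obtain a b where ab: "a \<bullet> z < b" "\<And>x. x \<in> K \<Longrightarrow> b < a \<bullet> x"
      using separating_hyperplane_closed_point[OF Kc Kcl] by blast
    define h where "h = - a"
    have "dual_norm Nn (transpose A *v h) \<le> - b"
    proof (rule dual_least[OF assms(1)])
      fix x assume "Nn x = 1"
      then have "x \<in> {x. Nn x \<le> 1}" by simp
      then have "b < a \<bullet> (A *v x)" using ab(2) unfolding K_def by blast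
      then show "(transpose A *v h) \<bullet> x \<le> - b"
        unfolding h_def by (simp add: dot_lmul_matrix)
    qed
    moreover have "h \<bullet> z \<le> dual_norm Nm h * Nm z" by (rule dual_le[OF assms(2)])
    moreover have "dual_norm Nm h \<ge> 0"
    proof -
      obtain u where "Nm u = 1" using isn_unit[OF assms(2)] by blast
      then have "h \<bullet> u \<le> dual_norm Nm h" "h \<bullet> (-u) \<le> dual_norm Nm h"
        using dual_le[OF assms(2), of h u] dual_le[OF assms(2), of h "-u"] isn_basic(2)[OF assms(2), of u]
        by auto
      then show ?thesis by simp
    qed
    moreover have "dual_norm Nm h * Nm z \<le> dual_norm Nm h * \<mu>" using z calculation(3) by (intro mult_left_mono)
    moreover have "h \<bullet> z > - b" using ab(1) unfolding h_def by simp
    moreover have "\<mu> * dual_norm Nm h = dual_norm Nm h * \<mu>" by simp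
    ultimately show False using assms(4)[rule_format, of h] by linarith
  qed
  show ?thesis
  proof (cases "e = 0")
    case True then show ?thesis by (intro exI[of _ 0]) (simp add: isn_basic(1)[OF assms(1)] isn_basic(1)[OF assms(2)])
  next
    case False
    then have pos: "Nm e > 0" using isn_basic(4,7)[OF assms(2), of e] by linarith
    have "Nm ((\<mu> / Nm e) *\<^sub>R e) = \<mu>" using pos assms(3) isn_basic(6)[OF assms(2)] by simp
    then have "(\<mu> / Nm e) *\<^sub>R e \<in> K" using mem by simp
    then obtain x where x0: "(\<mu> / Nm e) *\<^sub>R e = A *v x" "x \<in> {x. Nn x \<le> 1}" unfolding K_def by (erule imageE)
    then have x: "Nn x \<le> 1" "A *v x = (\<mu> / Nm e) *\<^sub>R e" by auto
    define d where "d = (Nm e / \<mu>) *\<^sub>R x"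
    have "A *v d = e" unfolding d_def using x(2) pos assms(3) by (simp add: matrix_vector_mult_scaleR)
    moreover have "Nn d \<le> Nm e / \<mu>" unfolding d_def using isn_basic(6)[OF assms(1)] x(1) pos assms(3)
      by (simp add: mult_left_le divide_right_mono)
    ultimately show ?thesis by blast
  qed
qed

theorem theorem2:
  fixes Nn :: "real^'n \<Rightarrow> real" and Nm :: "real^'m \<Rightarrow> real"
    and g :: "real^'n \<Rightarrow> real^'m" and g' :: "real^'n \<Rightarrow> real^'n^'m"
    and y :: "real^'m" and \<rho> L \<mu>0 :: real
  assumes "is_norm Nn" and "is_norm Nm"
    and "\<rho> > 0" and "L > 0" and "\<mu>0 > 0"
    and "g 0 = 0"
    and "\<forall>x. Nn x \<le> \<rho> \<longrightarrow> (g has_derivative (\<lambda>h. g' x *v h)) (at x)"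
    and "\<forall>xa xb. Nn xa \<le> \<rho> \<longrightarrow> Nn xb \<le> \<rho> \<longrightarrow>
           op_norm Nn Nm (g' xa - g' xb) \<le> L * Nn (xa - xb)"
    and "\<forall>h. dual_norm Nn (transpose (g' 0) *v h) \<ge> \<mu>0 * dual_norm Nm h"
    and "Nm y < \<mu>0^2 / (4 * L)" and "\<mu>0 / (2 * L) \<le> \<rho>"
  shows "\<exists>x. g x = y \<and> Nn x \<le> 2 * Nm y / \<mu>0"
proof -
  note nn = isn_basic[OF assms(1)] and nm = isn_basic[OF assms(2)]
  define S where "S = {x. Nn x \<le> \<rho>}"
  define \<Psi> where "\<Psi> x = (2 / \<mu>0) * Nm (g x - y) + Nn x" for x
  define R where "R = 2 * Nm y / \<mu>0"
  have contg: "continuous_on S g"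
    using assms(7) has_derivative_continuous unfolding S_def
    by (intro continuous_at_imp_continuous_on) blast
  have contP: "continuous_on S \<Psi>" unfolding \<Psi>_def
    by (intro continuous_on_add continuous_on_mult continuous_on_const isn_cont[OF assms(1)]
        continuous_on_compose2[OF isn_cont[OF assms(2)] _ subset_UNIV] continuous_on_diff contg)
  have "0 \<in> S" unfolding S_def using nn(1) assms(3) by simp
  then obtain xb where xbS: "xb \<in> S" and xbmin: "\<And>z. z \<in> S \<Longrightarrow> \<Psi> xb \<le> \<Psi> z"
    using continuous_attains_inf[OF ball_compact[OF assms(1)] _ contP[unfolded S_def]]
    unfolding S_def by blast
  have "\<Psi> 0 = R" unfolding \<Psi>_def R_def using assms(6) nn(1) nm(2)[of y] by simp
  then have PR: "\<Psi> xb \<le> R" using xbmin[OF \<open>0 \<in> S\<close>] by simp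
  have xbR: "Nn xb \<le> R" using PR nm(4)[of "g xb - y"] assms(5) unfolding \<Psi>_def
    by (smt (verit) divide_pos_pos mult_nonneg_nonneg)
  have Rlt: "R < \<mu>0 / (2 * L)"
  proof -
    have "2 * Nm y < 2 * (\<mu>0^2 / (4 * L))" using assms(10) by simp
    also have "\<dots> = \<mu>0 * (\<mu>0 / (2 * L))" by (simp add: power2_eq_square field_simps)
    finally show ?thesis unfolding R_def using assms(5) by (simp add: field_simps)
  qed
  have PL: "2 * L * Nn xb < \<mu>0"
  proof -
    have "Nn xb < \<mu>0 / (2 * L)" using xbR Rlt by simp
    then show ?thesis using assms(4) by (simp add: field_simps)
  qed
  have gy: "g xb = y"
  proof (rule ccontr)
    assume ne: "g xb \<noteq> y"
    define e where "e = y - g xb"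
    define \<epsilon> where "\<epsilon> = Nm e"
    have \<epsilon>pos: "\<epsilon> > 0" using ne nm(4,7)[of e] unfolding \<epsilon>_def e_def by force
    obtain d where d: "g' 0 *v d = e" "Nn d \<le> \<epsilon> / \<mu>0"
      using right_inverse[OF assms(1,2,5,9)] unfolding \<epsilon>_def by blast
    have lip: "op_norm Nn Nm (g' xb - g' 0) \<le> L * Nn xb"
      using assms(8) xbS \<open>0 \<in> S\<close> unfolding S_def by force
    have mid: "Nm ((g' xb - g' 0) *v d) \<le> L * Nn xb * (\<epsilon> / \<mu>0)"
    proof -
      have "Nm ((g' xb - g' 0) *v d) \<le> op_norm Nn Nm (g' xb - g' 0) * Nn d" by (rule op_le[OF assms(1,2)])
      also have "\<dots> \<le> L * Nn xb * Nn d" using lip nn(4)[of d] by (intro mult_right_mono)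
      also have "\<dots> \<le> L * Nn xb * (\<epsilon> / \<mu>0)" using d(2) assms(4) nn(4)[of xb] by (intro mult_left_mono) auto
      finally show ?thesis .
    qed
    define \<kappa> where "\<kappa> = \<epsilon> / \<mu>0 * (1 - 2 * L * Nn xb / \<mu>0)"
    have \<kappa>pos: "\<kappa> > 0" unfolding \<kappa>_def using \<epsilon>pos assms(5) PL by (simp add: field_simps)
    obtain Cm where Cm: "Cm > 0" "\<And>x. Nm x \<le> Cm * norm x" using isn_upper[OF assms(2)] by blast
    define \<eta> where "\<eta> = \<kappa> * \<mu>0 / (4 * Cm * (norm d + 1))"
    have \<eta>pos: "\<eta> > 0" unfolding \<eta>_def using \<kappa>pos assms(5) Cm(1) by (simp add: add_nonneg_pos)
    have xbrho: "Nn xb \<le> \<rho>" using xbS unfolding S_def by simp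
    obtain \<delta> where \<delta>: "\<delta> > 0" "\<And>z. norm (z - xb) < \<delta> \<Longrightarrow>
        norm (g z - g xb - g' xb *v (z - xb)) \<le> \<eta> * norm (z - xb)"
      using assms(7)[rule_format, OF xbrho] \<eta>pos unfolding has_derivative_at_alt by blast
    have gap: "Nn xb < \<rho>" using xbR Rlt assms(11) by simp
    define t where "t = min (1/2) (min (\<delta> / (2 * (norm d + 1))) ((\<rho> - Nn xb) / (Nn d + 1)))"
    have tpos: "t > 0" unfolding t_def using \<delta>(1) gap nn(4)[of d] by (simp add: add_nonneg_pos)
    have t1: "t \<le> 1/2" unfolding t_def by (rule min.cobounded1)
    have t2: "t * (norm d + 1) \<le> \<delta> / 2"
    proof -
      have p: "2 * (norm d + 1) > 0" by (simp add: add_nonneg_pos)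
      have "t \<le> \<delta> / (2 * (norm d + 1))" unfolding t_def by simp
      then have "t * (2 * (norm d + 1)) \<le> \<delta>" using pos_le_divide_eq[OF p] by blast
      then show ?thesis by (simp add: algebra_simps)
    qed
    have t3: "t * (Nn d + 1) \<le> \<rho> - Nn xb"
    proof -
      have p: "Nn d + 1 > 0" using nn(4)[of d] by simp
      have "t \<le> (\<rho> - Nn xb) / (Nn d + 1)" unfolding t_def by simp
      then show ?thesis using pos_le_divide_eq[OF p] by blast
    qed
    define z where "z = xb + t *\<^sub>R d"
    have zS: "z \<in> S"
    proof -
      have "Nn z \<le> Nn xb + Nn (t *\<^sub>R d)" unfolding z_def by (rule nn(5))
      also have "\<dots> = Nn xb + t * Nn d" using nn(6) tpos by simp
      also have "\<dots> \<le> \<rho>" using t3 tpos by (simp add: algebra_simps)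
      finally show ?thesis unfolding S_def by simp
    qed
    have nz: "norm (z - xb) = t * norm d" unfolding z_def using tpos by simp
    have "t * norm d \<le> t * (norm d + 1)" using tpos by simp
    then have "t * norm d < \<delta>" using t2 \<delta>(1) by linarith
    then have remb: "norm (g z - g xb - g' xb *v (t *\<^sub>R d)) \<le> \<eta> * (t * norm d)"
      using \<delta>(2)[of z] nz tpos unfolding z_def by simp
    define rem where "rem = g z - g xb - g' xb *v (t *\<^sub>R d)"
    have remN: "Nm rem \<le> t * \<kappa> * \<mu>0 / 4"
    proof -
      have "Nm rem \<le> Cm * (\<eta> * (t * norm d))" using Cm(2)[of rem] remb Cm(1) unfolding rem_def
        by (meson mult_left_mono less_imp_le order_trans)
      also have "\<dots> = t * \<kappa> * \<mu>0 / 4 * (norm d / (norm d + 1))"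
      proof -
        have "Cm * 4 + Cm * (norm d * 4) \<noteq> 0" "4 + norm d * 4 \<noteq> 0" "norm d + 1 \<noteq> 0"
          using Cm(1) by (smt (verit) mult_pos_pos mult_nonneg_nonneg norm_ge_zero)+
        then show ?thesis unfolding \<eta>_def using Cm(1) by (simp add: field_simps)
      qed
      also have "\<dots> \<le> t * \<kappa> * \<mu>0 / 4"
        using tpos \<kappa>pos assms(5) by (intro mult_left_le) (auto simp: add_nonneg_pos)
      finally show ?thesis .
    qed
    have decomp: "g z - y = (1 - t) *\<^sub>R (g xb - y) + t *\<^sub>R ((g' xb - g' 0) *v d) + rem"
    proof -
      have hh: "g' 0 *v d = y - g xb" using d(1) unfolding e_def .
      have "(1 - t) *\<^sub>R (g xb - y) + t *\<^sub>R ((g' xb - g' 0) *v d) + rem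
          = (1 - t) *\<^sub>R (g xb - y) + t *\<^sub>R (g' xb *v d) - t *\<^sub>R (g' 0 *v d) + rem"
        by (simp add: matrix_vector_mult_diff_rdistrib scaleR_diff_right)
      also have "\<dots> = (1 - t) *\<^sub>R (g xb - y) + t *\<^sub>R (g' xb *v d) - t *\<^sub>R (y - g xb) + rem"
        unfolding hh ..
      also have "\<dots> = g z - y" unfolding rem_def
        by (simp add: matrix_vector_mult_scaleR algebra_simps)
      finally show ?thesis by simp
    qed
    have "Nm (g z - y) \<le> Nm ((1 - t) *\<^sub>R (g xb - y)) + Nm (t *\<^sub>R ((g' xb - g' 0) *v d)) + Nm rem"
      unfolding decomp by (meson nm(5) add_mono order_trans order_refl)
    also have "\<dots> = (1 - t) * \<epsilon> + t * Nm ((g' xb - g' 0) *v d) + Nm rem"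
      using nm(6) tpos t1 nm(3)[of "g xb" y] unfolding \<epsilon>_def e_def by simp
    finally have N1: "Nm (g z - y) \<le> (1 - t) * \<epsilon> + t * (L * Nn xb * (\<epsilon> / \<mu>0)) + t * \<kappa> * \<mu>0 / 4"
      using mid remN tpos by (smt (verit) mult_left_mono)
    have N2: "Nn z \<le> Nn xb + t * (\<epsilon> / \<mu>0)"
    proof -
      have "Nn z \<le> Nn xb + Nn (t *\<^sub>R d)" unfolding z_def by (rule nn(5))
      also have "\<dots> = Nn xb + t * Nn d" using nn(6) tpos by simp
      also have "\<dots> \<le> Nn xb + t * (\<epsilon> / \<mu>0)" using d(2) tpos by (intro add_left_mono mult_left_mono) auto
      finally show ?thesis .
    qed
    have "\<Psi> z \<le> (2 / \<mu>0) * ((1 - t) * \<epsilon> + t * (L * Nn xb * (\<epsilon> / \<mu>0)) + t * \<kappa> * \<mu>0 / 4)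
          + Nn xb + t * (\<epsilon> / \<mu>0)"
      unfolding \<Psi>_def using N1 N2 assms(5) by (smt (verit) divide_pos_pos mult_left_mono)
    also have "\<dots> = \<Psi> xb - t * \<kappa> / 2"
      unfolding \<Psi>_def \<kappa>_def using assms(5) nm(3)[of "g xb" y] unfolding \<epsilon>_def e_def
      by (simp add: field_simps)
    also have "\<dots> < \<Psi> xb" using tpos \<kappa>pos by simp
    finally show False using xbmin[OF zS] by simp
  qed
  show ?thesis using gy xbR unfolding R_def by blast
qed

end
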